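(* For $n\ge2$, within the set of CPS tensors in $\mathbb{C}^{n\times n\times n\times n}$: $\mathbb{C}\vec S^{n^2\times n^2}_+$ is a proper subset of $CPS^{n^4}_+$ and a proper subset of $HPSD^{4,n}_+$; furthermore $CPS^{n^4}_+\not\subset HPSD^{4,n}_+$ and $HPSD^{4,n}_+\not\subset CPS^{n^4}_+$.
   Context: A tensor $\mathcal{A}\in\mathbb{C}^{n\times n\times n\times n}$ is conjugate partial-symmetric (CPS) if $\mathcal{A}_{ijkl}=\overline{\mathcal{A}_{klij}}$ and $\mathcal{A}_{ijkl}=\mathcal{A}_{jikl}=\mathcal{A}_{ijlk}$ for all indices. Write $\langle X,\mathcal{A}X\rangle=\sum_{i,j,k,l}\mathcal{A}_{ijkl}X_{kl}\overline{X_{ij}}$. For a CPS $\mathcal{A}$: $\mathcal{A}\in CPS^{n^4}_+$ (PSD) iff $\sum_{ijkl}\mathcal{A}_{ijkl}x_ix_j\bar x_k\bar x_l\ge0$ for all $x\in\mathbb{C}^n$; $\mathcal{A}\in\mathbb{C}\vec S^{n^2\times n^2}_+$ (matrix PSD) iff $\langle X,\mathcal{A}X\rangle\ge0$ for all complex symmetric $X\in\mathbb{C}^{n\times n}$ ($X=X^T$); $\mathcal{A}\in HPSD^{4,n}_+$ (general PSD) iff $\langle X,\mathcal{A}X\rangle\ge0$ for all Hermitian positive semidefinite $X\in\mathbb{C}^{n\times n}$. *)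

theory Defs
  imports Complex_Main
begin

text \<open>A fourth-order tensor in C^(n x n x n x n), indexed by a finite type 'n with CARD('n) = n.\<close>
type_synonym 'n tensor4 = "'n \<Rightarrow> 'n \<Rightarrow> 'n \<Rightarrow> 'n \<Rightarrow> complex"
type_synonym 'n cmat = "'n \<Rightarrow> 'n \<Rightarrow> complex"

definition is_CPS :: "('n::finite) tensor4 \<Rightarrow> bool" where
  "is_CPS A \<longleftrightarrow> (\<forall>i j k l. A i j k l = cnj (A k l i j) \<and> A i j k l = A j i k l \<and> A i j k l = A i j l k)"

definition nonneg_real :: "complex \<Rightarrow> bool" where
  "nonneg_real z \<longleftrightarrow> Im z = 0 \<and> Re z \<ge> 0"

definition tensor_form :: "('n::finite) tensor4 \<Rightarrow> ('n \<Rightarrow> complex) \<Rightarrow> complex" where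
  "tensor_form A x = (\<Sum>i\<in>UNIV. \<Sum>j\<in>UNIV. \<Sum>k\<in>UNIV. \<Sum>l\<in>UNIV.
      A i j k l * x i * x j * cnj (x k) * cnj (x l))"

definition mat_form :: "('n::finite) tensor4 \<Rightarrow> 'n cmat \<Rightarrow> complex" where
  "mat_form A X = (\<Sum>i\<in>UNIV. \<Sum>j\<in>UNIV. \<Sum>k\<in>UNIV. \<Sum>l\<in>UNIV.
      A i j k l * X k l * cnj (X i j))"

definition complex_symmetric :: "('n::finite) cmat \<Rightarrow> bool" where
  "complex_symmetric X \<longleftrightarrow> (\<forall>i j. X i j = X j i)"

definition hermitian_psd :: "('n::finite) cmat \<Rightarrow> bool" where
  "hermitian_psd X \<longleftrightarrow> (\<forall>i j. X i j = cnj (X j i)) \<and>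
     (\<forall>v :: 'n \<Rightarrow> complex. nonneg_real (\<Sum>i\<in>UNIV. \<Sum>j\<in>UNIV. cnj (v i) * X i j * v j))"

definition CPS_psd :: "('n::finite) tensor4 set" where
  "CPS_psd = {A. is_CPS A \<and> (\<forall>x. nonneg_real (tensor_form A x))}"

definition CPS_matrix_psd :: "('n::finite) tensor4 set" where
  "CPS_matrix_psd = {A. is_CPS A \<and> (\<forall>X. complex_symmetric X \<longrightarrow> nonneg_real (mat_form A X))}"

definition CPS_HPSD :: "('n::finite) tensor4 set" where
  "CPS_HPSD = {A. is_CPS A \<and> (\<forall>X. hermitian_psd X \<longrightarrow> nonneg_real (mat_form A X))}"

end

theory Submission imports Defs begin
definition T :: "'n \<Rightarrow> 'n \<Rightarrow> 'n \<Rightarrow> 'n \<Rightarrow> ('n::finite) tensor4" where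
 "T p q r s = (\<lambda>i j k l. if i=p \<and> j=q \<and> k=r \<and> l=s then 1 else 0)"
definition tadd :: "('n::finite) tensor4 \<Rightarrow> 'n tensor4 \<Rightarrow> 'n tensor4" where
 "tadd A B = (\<lambda>i j k l. A i j k l + B i j k l)"
definition tsub :: "('n::finite) tensor4 \<Rightarrow> 'n tensor4 \<Rightarrow> 'n tensor4" where
 "tsub A B = (\<lambda>i j k l. A i j k l - B i j k l)"

lemma sum4_delta:
  fixes g :: "'n::finite \<Rightarrow> 'n \<Rightarrow> 'n \<Rightarrow> 'n \<Rightarrow> complex"
  shows "(\<Sum>i\<in>UNIV. \<Sum>j\<in>UNIV. \<Sum>k\<in>UNIV. \<Sum>l\<in>UNIV. (if i=p \<and> j=q \<and> k=r \<and> l=s then 1 else 0) * g i j k l) = g p q r s"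
proof -
  have "\<And>i j k l. (if i=p \<and> j=q \<and> k=r \<and> l=s then 1 else 0) * g i j k l =
    (if l = s then (if k = r then (if j = q then (if i = p then g i j k l else 0) else 0) else 0) else 0)"
    by auto
  then show ?thesis by (simp add: sum.delta)
qed

lemma mat_form_T: "mat_form (T p q r s) X = X r s * cnj (X p q)"
  unfolding mat_form_def T_def by (simp only: mult.assoc sum4_delta)
lemma tensor_form_T: "tensor_form (T p q r s) x = x p * x q * cnj (x r) * cnj (x s)"
  unfolding tensor_form_def T_def by (simp only: mult.assoc sum4_delta)
lemma mat_form_add: "mat_form (tadd A B) X = mat_form A X + mat_form B X"
  unfolding mat_form_def tadd_def by (simp add: distrib_right sum.distrib)
lemma mat_form_sub: "mat_form (tsub A B) X = mat_form A X - mat_form B X"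
  unfolding mat_form_def tsub_def by (simp add: left_diff_distrib sum_subtractf)
lemma tensor_form_add: "tensor_form (tadd A B) X = tensor_form A X + tensor_form B X"
  unfolding tensor_form_def tadd_def by (simp add: distrib_right sum.distrib)
lemma tensor_form_sub: "tensor_form (tsub A B) X = tensor_form A X - tensor_form B X"
  unfolding tensor_form_def tsub_def by (simp add: left_diff_distrib sum_subtractf)
lemma CPS_add: assumes "is_CPS A" "is_CPS B" shows "is_CPS (tadd A B)"
  unfolding is_CPS_def tadd_def
proof (intro allI conjI)
  fix i j k l
  have a: "A i j k l = cnj (A k l i j)" "A i j k l = A j i k l" "A i j k l = A i j l k"
   and b: "B i j k l = cnj (B k l i j)" "B i j k l = B j i k l" "B i j k l = B i j l k"
    using assms unfolding is_CPS_def by blast+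
  show "A i j k l + B i j k l = cnj (A k l i j + B k l i j)"
    by (simp only: complex_cnj_add a(1)[symmetric] b(1)[symmetric])
  show "A i j k l + B i j k l = A j i k l + B j i k l"
    by (simp only: a(2)[symmetric] b(2)[symmetric])
  show "A i j k l + B i j k l = A i j l k + B i j l k"
    by (simp only: a(3)[symmetric] b(3)[symmetric])
qed
lemma CPS_sub: assumes "is_CPS A" "is_CPS B" shows "is_CPS (tsub A B)"
  unfolding is_CPS_def tsub_def
proof (intro allI conjI)
  fix i j k l
  have a: "A i j k l = cnj (A k l i j)" "A i j k l = A j i k l" "A i j k l = A i j l k"
   and b: "B i j k l = cnj (B k l i j)" "B i j k l = B j i k l" "B i j k l = B i j l k"
    using assms unfolding is_CPS_def by blast+
  show "A i j k l - B i j k l = cnj (A k l i j - B k l i j)"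
    by (simp only: complex_cnj_diff a(1)[symmetric] b(1)[symmetric])
  show "A i j k l - B i j k l = A j i k l - B j i k l"
    by (simp only: a(2)[symmetric] b(2)[symmetric])
  show "A i j k l - B i j k l = A i j l k - B i j l k"
    by (simp only: a(3)[symmetric] b(3)[symmetric])
qed
lemma T_cnj: "cnj (T p q r s i j k l) = T p q r s i j k l" by (simp add: T_def)
lemma T_swap1: "T p q r s k l i j = T r s p q i j k l" by (auto simp add: T_def)
lemma T_swap2: "T p q r s j i k l = T q p r s i j k l" by (auto simp add: T_def)
lemma T_swap3: "T p q r s i j l k = T p q s r i j k l" by (auto simp add: T_def)
lemma CPS_P: "is_CPS (tadd (tadd (tadd (T p q p q) (T p q q p)) (T q p p q)) (T q p q p))"
  unfolding is_CPS_def tadd_def by (simp add: T_cnj T_swap1 T_swap2 T_swap3 add_ac)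
lemma CPS_Q: "is_CPS (tadd (T p p q q) (T q q p p))"
  unfolding is_CPS_def tadd_def by (simp add: T_cnj T_swap1 T_swap2 T_swap3 add_ac)

lemma matpsd_psd:
  assumes "A \<in> CPS_matrix_psd" shows "A \<in> CPS_psd"
proof -
  have cps: "is_CPS A" using assms by (simp add: CPS_matrix_psd_def)
  { fix x :: "'a \<Rightarrow> complex"
    let ?X = "\<lambda>k l. cnj (x k) * cnj (x l)"
    have "complex_symmetric ?X" by (simp add: complex_symmetric_def mult.commute)
    hence "nonneg_real (mat_form A ?X)" using assms by (simp add: CPS_matrix_psd_def)
    moreover have "mat_form A ?X = tensor_form A x"
      unfolding mat_form_def tensor_form_def by (simp add: mult_ac)
    ultimately have "nonneg_real (tensor_form A x)" by simp }
  thus ?thesis using cps by (simp add: CPS_psd_def)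
qed

definition G :: "('n::finite) tensor4 \<Rightarrow> 'n cmat \<Rightarrow> 'n \<Rightarrow> 'n \<Rightarrow> complex" where
  "G A X i j = (\<Sum>k\<in>UNIV. \<Sum>l\<in>UNIV. A i j k l * X k l)"

lemma mat_form_G: "mat_form A X = (\<Sum>i\<in>UNIV. \<Sum>j\<in>UNIV. G A X i j * cnj (X i j))"
  unfolding mat_form_def G_def by (simp add: sum_distrib_right)

lemma G_transpose:
  assumes "is_CPS A" shows "G A (\<lambda>k l. X l k) i j = G A X i j"
proof -
  have "G A (\<lambda>k l. X l k) i j = (\<Sum>l\<in>UNIV. \<Sum>k\<in>UNIV. A i j k l * X l k)"
    unfolding G_def by (rule sum.swap)
  also have "\<dots> = (\<Sum>l\<in>UNIV. \<Sum>k\<in>UNIV. A i j l k * X l k)"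
  proof -
    have "\<And>k l. A i j k l = A i j l k" using assms unfolding is_CPS_def by blast
    thus ?thesis by (simp only:)
  qed
  also have "\<dots> = G A X i j" unfolding G_def ..
  finally show ?thesis .
qed

lemma G_sym: assumes "is_CPS A" shows "G A X j i = G A X i j"
proof -
  have "\<And>k l. A j i k l = A i j k l" using assms unfolding is_CPS_def by blast
  thus ?thesis unfolding G_def by (simp only:)
qed

lemma G_lin: "G A (\<lambda>k l. (X k l + Y k l) / 2) i j = (G A X i j + G A Y i j) / 2"
  unfolding G_def by (simp add: distrib_left sum.distrib sum_divide_distrib add_divide_distrib)

lemma mat_form_symm:
  assumes "is_CPS A"
  shows "mat_form A (\<lambda>k l. (X k l + X l k) / 2) = mat_form A X"
proof -
  let ?S = "\<lambda>k l. (X k l + X l k) / 2"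
  have g: "G A ?S i j = G A X i j" for i j
    using G_lin[of A X "\<lambda>k l. X l k" i j] G_transpose[OF assms, of X i j] by simp
  have sw: "(\<Sum>i\<in>UNIV. \<Sum>j\<in>UNIV. G A X i j * cnj (X j i)) = (\<Sum>i\<in>UNIV. \<Sum>j\<in>UNIV. G A X i j * cnj (X i j))"
  proof -
    have "(\<Sum>i\<in>UNIV. \<Sum>j\<in>UNIV. G A X i j * cnj (X j i)) = (\<Sum>j\<in>UNIV. \<Sum>i\<in>UNIV. G A X i j * cnj (X j i))"
      by (rule sum.swap)
    also have "\<dots> = (\<Sum>j\<in>UNIV. \<Sum>i\<in>UNIV. G A X j i * cnj (X j i))"
      using G_sym[OF assms] by simp
    finally show ?thesis .
  qed
  have "mat_form A ?S = (\<Sum>i\<in>UNIV. \<Sum>j\<in>UNIV. G A X i j * cnj (?S i j))"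
    by (simp add: mat_form_G g)
  also have "\<dots> = ((\<Sum>i\<in>UNIV. \<Sum>j\<in>UNIV. G A X i j * cnj (X i j)) + (\<Sum>i\<in>UNIV. \<Sum>j\<in>UNIV. G A X i j * cnj (X j i))) / 2"
    by (simp add: distrib_left sum.distrib sum_divide_distrib add_divide_distrib)
  also have "\<dots> = mat_form A X" by (simp add: sw mat_form_G)
  finally show ?thesis .
qed

lemma matpsd_hpsd:
  assumes "A \<in> CPS_matrix_psd" shows "A \<in> CPS_HPSD"
proof -
  have cps: "is_CPS A" using assms by (simp add: CPS_matrix_psd_def)
  { fix X :: "'a cmat"
    let ?S = "\<lambda>k l. (X k l + X l k) / 2"
    have "complex_symmetric ?S" by (simp add: complex_symmetric_def add.commute)
    hence "nonneg_real (mat_form A ?S)" using assms by (simp add: CPS_matrix_psd_def)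
    hence "nonneg_real (mat_form A X)" using mat_form_symm[OF cps] by simp }
  thus ?thesis using cps by (simp add: CPS_HPSD_def)
qed

definition PP :: "'n \<Rightarrow> 'n \<Rightarrow> ('n::finite) tensor4" where
 "PP a b = tadd (tadd (tadd (T a b a b) (T a b b a)) (T b a a b)) (T b a b a)"
definition A2 :: "'n \<Rightarrow> 'n \<Rightarrow> ('n::finite) tensor4" where
 "A2 a b = tadd (T a a b b) (T b b a a)"
definition A1 :: "'n \<Rightarrow> 'n \<Rightarrow> ('n::finite) tensor4" where
 "A1 a b = tsub (PP a b) (A2 a b)"

lemma A2_CPS: "is_CPS (A2 a b)" unfolding A2_def by (rule CPS_Q)
lemma A1_CPS: "is_CPS (A1 a b)" unfolding A1_def PP_def A2_def
  by (intro CPS_sub CPS_P CPS_Q)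

lemma nonneg_cnj_mult: "nonneg_real (z * cnj z)"
  by (simp add: nonneg_real_def)

lemma rank_one_hpsd: "hermitian_psd (\<lambda>i j. v i * cnj (v j))"
proof -
  { fix w :: "'a \<Rightarrow> complex"
    have e1: "(\<Sum>i\<in>UNIV. \<Sum>j\<in>UNIV. cnj (w i) * (v i * cnj (v j)) * w j)
      = (\<Sum>i\<in>UNIV. cnj (w i) * v i) * (\<Sum>j\<in>UNIV. w j * cnj (v j))"
      by (simp add: sum_product mult_ac)
    have e2: "cnj (\<Sum>j\<in>UNIV. cnj (w j) * v j) = (\<Sum>j\<in>UNIV. w j * cnj (v j))"
      by simp
    have "(\<Sum>i\<in>UNIV. \<Sum>j\<in>UNIV. cnj (w i) * (v i * cnj (v j)) * w j)
      = (\<Sum>i\<in>UNIV. cnj (w i) * v i) * cnj (\<Sum>j\<in>UNIV. cnj (w j) * v j)"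
      by (simp only: e1 e2)
    hence "nonneg_real (\<Sum>i\<in>UNIV. \<Sum>j\<in>UNIV. cnj (w i) * (v i * cnj (v j)) * w j)"
      using nonneg_cnj_mult[of "\<Sum>i\<in>UNIV. cnj (w i) * v i"] by (simp only:) }
  thus ?thesis unfolding hermitian_psd_def by simp
qed

definition vv :: "'n \<Rightarrow> 'n \<Rightarrow> 'n \<Rightarrow> complex" where
  "vv a b = (\<lambda>i. if i = a then 1 else if i = b then \<i> else 0)"

lemma A1_psd: "A1 a b \<in> CPS_psd"
proof -
  { fix x :: "'a \<Rightarrow> complex"
    define w where "w = x a * cnj (x b)"
    have "tensor_form (A1 a b) x = 4 * w * cnj w - w^2 - (cnj w)^2"
      unfolding A1_def PP_def A2_def w_def
      by (simp add: tensor_form_add tensor_form_sub tensor_form_T power2_eq_square mult_ac)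
    moreover have "nonneg_real (4 * w * cnj w - w^2 - (cnj w)^2)"
      unfolding nonneg_real_def by (simp add: power2_eq_square algebra_simps) 
    ultimately have "nonneg_real (tensor_form (A1 a b) x)" by simp }
  thus ?thesis using A1_CPS by (simp add: CPS_psd_def)
qed

lemma A1_not_hpsd: assumes "a \<noteq> b" shows "A1 a b \<notin> CPS_HPSD"
proof
  assume h: "A1 a b \<in> CPS_HPSD"
  let ?X = "\<lambda>i j. vv a b i * cnj (vv a b j)"
  have "nonneg_real (mat_form (A1 a b) ?X)"
    using h rank_one_hpsd[of "vv a b"] by (simp add: CPS_HPSD_def)
  moreover have "mat_form (A1 a b) ?X = -2"
    using assms unfolding A1_def PP_def A2_def
    by (simp add: mat_form_add mat_form_sub mat_form_T vv_def)
  ultimately show False by (simp add: nonneg_real_def)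
qed

lemma A2_not_psd: assumes "a \<noteq> b" shows "A2 a b \<notin> CPS_psd"
proof
  assume h: "A2 a b \<in> CPS_psd"
  have "nonneg_real (tensor_form (A2 a b) (vv a b))"
    using h by (simp add: CPS_psd_def)
  moreover have "tensor_form (A2 a b) (vv a b) = -2"
    using assms unfolding A2_def
    by (simp add: tensor_form_add tensor_form_T vv_def)
  ultimately show False by (simp add: nonneg_real_def)
qed

lemma hpsd_diag:
  assumes "hermitian_psd X" shows "nonneg_real (X a a)"
proof -
  let ?w = "\<lambda>i. if i = a then (1::complex) else 0"
  have "nonneg_real (\<Sum>i\<in>UNIV. \<Sum>j\<in>UNIV. cnj (?w i) * X i j * ?w j)"
    using assms unfolding hermitian_psd_def by (rule conjunct2[THEN spec])
  moreover have "(\<Sum>i\<in>UNIV. \<Sum>j\<in>UNIV. cnj (?w i) * X i j * ?w j) = X a a"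
  proof -
    have "\<And>i j. cnj (?w i) * X i j * ?w j = (if j = a then (if i = a then X i j else 0) else 0)"
      by simp
    thus ?thesis by (simp add: sum.delta)
  qed
  ultimately show ?thesis by simp
qed

lemma A2_hpsd: "A2 a b \<in> CPS_HPSD"
proof -
  { fix X :: "'a cmat" assume h: "hermitian_psd X"
    have 1: "nonneg_real (X a a)" "nonneg_real (X b b)" using hpsd_diag[OF h] by auto
    have "mat_form (A2 a b) X = X b b * cnj (X a a) + X a a * cnj (X b b)"
      unfolding A2_def by (simp add: mat_form_add mat_form_T)
    moreover have "nonneg_real (X b b * cnj (X a a) + X a a * cnj (X b b))"
      using 1 unfolding nonneg_real_def by simp
    ultimately have "nonneg_real (mat_form (A2 a b) X)" by simp }
  thus ?thesis using A2_CPS by (simp add: CPS_HPSD_def)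
qed

theorem mainTheorem20:
  assumes "card (UNIV :: ('n::finite) set) \<ge> 2"
  shows "(CPS_matrix_psd :: 'n tensor4 set) \<subset> CPS_psd
       \<and> (CPS_matrix_psd :: 'n tensor4 set) \<subset> CPS_HPSD
       \<and> \<not> ((CPS_psd :: 'n tensor4 set) \<subseteq> CPS_HPSD)
       \<and> \<not> ((CPS_HPSD :: 'n tensor4 set) \<subseteq> CPS_psd)"
proof -
  obtain a :: 'n where True by simp
  have "UNIV \<noteq> {a}" using assms by (metis card.empty card_insert_disjoint empty_iff finite.emptyI numeral_le_one_iff semiring_norm(69) One_nat_def)
  then obtain b :: 'n where "b \<notin> {a}" by (metis UNIV_eq_I insertI1 singletonD)
  hence ab: "a \<noteq> b" by simp
  have s1: "(CPS_matrix_psd :: 'n tensor4 set) \<subseteq> CPS_psd" using matpsd_psd by blast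
  have s2: "(CPS_matrix_psd :: 'n tensor4 set) \<subseteq> CPS_HPSD" using matpsd_hpsd by blast
  have n1: "A1 a b \<notin> CPS_matrix_psd" using A1_not_hpsd[OF ab] s2 by blast
  have n2: "A2 a b \<notin> CPS_matrix_psd" using A2_not_psd[OF ab] s1 by blast
  show ?thesis using s1 s2 n1 n2 A1_psd[of a b] A2_hpsd[of a b] A1_not_hpsd[OF ab] A2_not_psd[OF ab]
    by blast
qed
end
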